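(* Let $\Pi$ be a policy class, $\pi_G$ a fixed goal-conditioned policy, $\rho^{e_1},\dots,\rho^{e_N}$ joint distributions over observations and goals ("source" distributions, $E=\{e_1,\dots,e_N\}$) and $\rho^t$ a "target" joint distribution. Write $\epsilon^{e_i}=\epsilon^{\rho^{e_i}}$ and $\epsilon^t=\epsilon^{\rho^t}$. For weights $\alpha=(\alpha_1,\dots,\alpha_N)$ with $\alpha_i\in[0,1]$, $\sum_i\alpha_i=1$, let $$\lambda_\alpha=\inf_{\pi'\in\Pi}\Big[\sum_{i=1}^N\alpha_i\epsilon^{e_i}(\pi'\|\pi_G)+\epsilon^t(\pi'\|\pi_G)\Big],$$ let $\delta_E=\max_{e,e'\in E}d_{\Pi\Delta\Pi}(\rho^e,\rho^{e'})$, and let $B=B(\delta_E,E\mid\Pi)$. Then for every $\pi\in\Pi$, $$\epsilon^t(\pi\|\pi_G)\le \inf_\alpha\Big[\sum_{i=1}^N\alpha_i\epsilon^{e_i}(\pi\|\pi_G)+\lambda_\alpha\Big]+\delta_E+\inf_{\rho\in B}d_{\Pi\Delta\Pi}(\rho,\rho^t).$$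
   Context: A goal-conditioned policy is a conditional distribution $\pi(a\mid x,g)$ over actions given an observation $x$ and goal $g$. $D_{\mathrm{TV}}(\pi_1(\cdot\mid x,g)\|\pi_2(\cdot\mid x,g))=\sup_{A'}|\pi_1(A'\mid x,g)-\pi_2(A'\mid x,g)|$ over measurable sets of actions $A'$. For a joint distribution $\rho(x,g)$, $\epsilon^{\rho}(\pi_1\|\pi_2)=\mathbb{E}_{(x,g)\sim\rho}[D_{\mathrm{TV}}(\pi_1(\cdot\mid x,g)\|\pi_2(\cdot\mid x,g))]$. For a policy class $\Pi$, $d_{\Pi\Delta\Pi}(\rho,\rho')=\sup_{\pi,\pi'\in\Pi}|\epsilon^{\rho}(\pi\|\pi')-\epsilon^{\rho'}(\pi\|\pi')|$. The characteristic set $B(\delta,E\mid\Pi)$ of a collection of joint distributions $\{\rho^{e_i}\}_{e_i\in E}$ is the set of all joint distributions $\rho(x,g)$ with $d_{\Pi\Delta\Pi}(\rho,\rho^{e_i})\le\delta$ for every $e_i\in E$. *)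

theory Defs
  imports "HOL-Probability.Probability"
begin

definition policy :: "'a measure \<Rightarrow> ('x \<Rightarrow> 'g \<Rightarrow> 'a measure) \<Rightarrow> bool" where
  "policy A \<pi> \<longleftrightarrow> (\<forall>x g. prob_space (\<pi> x g) \<and> sets (\<pi> x g) = sets A)"

definition joint_dist :: "('x \<times> 'g) measure \<Rightarrow> ('x \<times> 'g) measure \<Rightarrow> bool" where
  "joint_dist XG \<rho> \<longleftrightarrow> prob_space \<rho> \<and> sets \<rho> = sets XG"

definition dTV :: "'a measure \<Rightarrow> 'a measure \<Rightarrow> real" where
  "dTV \<mu> \<nu> = (SUP S\<in>sets \<mu>. \<bar>measure \<mu> S - measure \<nu> S\<bar>)"

definition eps :: "('x \<times> 'g) measure \<Rightarrow> ('x \<Rightarrow> 'g \<Rightarrow> 'a measure) \<Rightarrow> ('x \<Rightarrow> 'g \<Rightarrow> 'a measure) \<Rightarrow> real" where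
  "eps \<rho> \<pi>1 \<pi>2 = (\<integral>p. dTV (\<pi>1 (fst p) (snd p)) (\<pi>2 (fst p) (snd p)) \<partial>\<rho>)"

definition dPiDeltaPi :: "('x \<Rightarrow> 'g \<Rightarrow> 'a measure) set \<Rightarrow> ('x \<times> 'g) measure \<Rightarrow> ('x \<times> 'g) measure \<Rightarrow> real" where
  "dPiDeltaPi Pol \<rho> \<rho>' = (SUP pp\<in>Pol \<times> Pol. \<bar>eps \<rho> (fst pp) (snd pp) - eps \<rho>' (fst pp) (snd pp)\<bar>)"

definition char_set :: "('x \<times> 'g) measure \<Rightarrow> ('x \<Rightarrow> 'g \<Rightarrow> 'a measure) set \<Rightarrow> real \<Rightarrow> 'e set
    \<Rightarrow> ('e \<Rightarrow> ('x \<times> 'g) measure) \<Rightarrow> ('x \<times> 'g) measure set" where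
  "char_set XG Pol \<delta> E \<rho>s = {\<rho>. joint_dist XG \<rho> \<and> (\<forall>e\<in>E. dPiDeltaPi Pol \<rho> (\<rho>s e) \<le> \<delta>)}"

definition simplex_weights :: "nat \<Rightarrow> (nat \<Rightarrow> real) set" where
  "simplex_weights N = {\<alpha>. (\<forall>i\<in>{1..N}. 0 \<le> \<alpha> i \<and> \<alpha> i \<le> 1) \<and> (\<Sum>i=1..N. \<alpha> i) = 1}"

definition lambda_alpha :: "('x \<Rightarrow> 'g \<Rightarrow> 'a measure) set \<Rightarrow> ('x \<Rightarrow> 'g \<Rightarrow> 'a measure) \<Rightarrow> nat
    \<Rightarrow> (nat \<Rightarrow> ('x \<times> 'g) measure) \<Rightarrow> ('x \<times> 'g) measure \<Rightarrow> (nat \<Rightarrow> real) \<Rightarrow> real" where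
  "lambda_alpha Pol \<pi>G N \<rho>e \<rho>t \<alpha> =
     (INF \<pi>'\<in>Pol. (\<Sum>i=1..N. \<alpha> i * eps (\<rho>e i) \<pi>' \<pi>G) + eps \<rho>t \<pi>' \<pi>G)"

definition delta_E :: "('x \<Rightarrow> 'g \<Rightarrow> 'a measure) set \<Rightarrow> nat \<Rightarrow> (nat \<Rightarrow> ('x \<times> 'g) measure) \<Rightarrow> real" where
  "delta_E Pol N \<rho>e = Max {dPiDeltaPi Pol (\<rho>e i) (\<rho>e j) | i j. i \<in> {1..N} \<and> j \<in> {1..N}}"

end

theory Submission imports Defs begin

lemma dTV_bdd:
  assumes "prob_space \<mu>" "prob_space \<nu>"
  shows "bdd_above ((\<lambda>S. \<bar>measure \<mu> S - measure \<nu> S\<bar>) ` X)"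
proof -
  have "\<bar>measure \<mu> S - measure \<nu> S\<bar> \<le> 1" for S
    using prob_space.prob_le_1[OF assms(1), of S] prob_space.prob_le_1[OF assms(2), of S]
      measure_nonneg[of \<mu> S] measure_nonneg[of \<nu> S] by linarith
  then show ?thesis by (intro bdd_aboveI2[where M=1]) simp
qed

lemma dTV_le1:
  assumes "prob_space \<mu>" "prob_space \<nu>"
  shows "dTV \<mu> \<nu> \<le> 1"
  unfolding dTV_def
proof (rule cSUP_least)
  show "sets \<mu> \<noteq> {}" using sets.empty_sets by blast
  fix S show "\<bar>measure \<mu> S - measure \<nu> S\<bar> \<le> 1"
    using prob_space.prob_le_1[OF assms(1), of S] prob_space.prob_le_1[OF assms(2), of S]
      measure_nonneg[of \<mu> S] measure_nonneg[of \<nu> S] by linarith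
qed

lemma dTV_ge0:
  assumes "prob_space \<mu>" "prob_space \<nu>"
  shows "0 \<le> dTV \<mu> \<nu>"
  unfolding dTV_def
  by (rule order_trans[OF _ cSUP_upper[OF sets.empty_sets dTV_bdd[OF assms]]]) simp

lemma dTV_upper:
  assumes "prob_space \<mu>" "prob_space \<nu>" "S \<in> sets \<mu>"
  shows "\<bar>measure \<mu> S - measure \<nu> S\<bar> \<le> dTV \<mu> \<nu>"
  unfolding dTV_def by (rule cSUP_upper[OF assms(3) dTV_bdd[OF assms(1,2)]])

lemma dTV_sym:
  assumes "sets \<mu> = sets \<nu>"
  shows "dTV \<mu> \<nu> = dTV \<nu> \<mu>"
  unfolding dTV_def assms by (simp add: abs_minus_commute)

lemma dTV_tri:
  assumes "prob_space \<mu>" "prob_space \<nu>" "prob_space \<kappa>" "sets \<mu> = sets \<nu>"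
  shows "dTV \<mu> \<kappa> \<le> dTV \<mu> \<nu> + dTV \<nu> \<kappa>"
  unfolding dTV_def[of \<mu> \<kappa>]
proof (rule cSUP_least)
  show "sets \<mu> \<noteq> {}" using sets.empty_sets by blast
  fix S assume S: "S \<in> sets \<mu>"
  have "\<bar>measure \<mu> S - measure \<kappa> S\<bar> \<le> \<bar>measure \<mu> S - measure \<nu> S\<bar> + \<bar>measure \<nu> S - measure \<kappa> S\<bar>"
    by linarith
  also have "\<dots> \<le> dTV \<mu> \<nu> + dTV \<nu> \<kappa>"
    using dTV_upper[OF assms(1,2) S] dTV_upper[OF assms(2,3), of S] S assms(4) by simp
  finally show "\<bar>measure \<mu> S - measure \<kappa> S\<bar> \<le> dTV \<mu> \<nu> + dTV \<nu> \<kappa>" .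
qed

context
  fixes XG :: "('x \<times> 'g) measure" and A :: "'a measure"
    and P :: "('x \<Rightarrow> 'g \<Rightarrow> 'a measure) set"
  assumes polP: "\<forall>\<pi>'\<in>P. policy A \<pi>'"
    and measP: "\<forall>\<pi>1\<in>P. \<forall>\<pi>2\<in>P.
                 (\<lambda>p. dTV (\<pi>1 (fst p) (snd p)) (\<pi>2 (fst p) (snd p))) \<in> borel_measurable XG"
begin

lemma eps_integrable:
  assumes "joint_dist XG \<rho>" "\<pi>1 \<in> P" "\<pi>2 \<in> P"
  shows "integrable \<rho> (\<lambda>p. dTV (\<pi>1 (fst p) (snd p)) (\<pi>2 (fst p) (snd p)))"
proof -
  have ps: "prob_space \<rho>" "sets \<rho> = sets XG" using assms(1) by (auto simp: joint_dist_def)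
  have pp: "prob_space (\<pi>1 x g)" "prob_space (\<pi>2 x g)" for x g
    using polP assms(2,3) by (auto simp: policy_def)
  show ?thesis
  proof (rule finite_measure.integrable_const_bound[where B=1])
    show "finite_measure \<rho>" using ps(1) prob_space_def by blast
    show "AE x in \<rho>. norm (dTV (\<pi>1 (fst x) (snd x)) (\<pi>2 (fst x) (snd x))) \<le> 1"
      using dTV_ge0[OF pp] dTV_le1[OF pp] by auto
    show "(\<lambda>p. dTV (\<pi>1 (fst p) (snd p)) (\<pi>2 (fst p) (snd p))) \<in> borel_measurable \<rho>"
      using measP assms(2,3) measurable_cong_sets[OF ps(2) refl] by blast
  qed
qed

lemma eps_bounds:
  assumes "joint_dist XG \<rho>" "\<pi>1 \<in> P" "\<pi>2 \<in> P"
  shows "0 \<le> eps \<rho> \<pi>1 \<pi>2" "eps \<rho> \<pi>1 \<pi>2 \<le> 1"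
proof -
  have ps: "prob_space \<rho>" using assms(1) by (auto simp: joint_dist_def)
  have pp: "prob_space (\<pi>1 x g)" "prob_space (\<pi>2 x g)" for x g
    using polP assms(2,3) by (auto simp: policy_def)
  show "0 \<le> eps \<rho> \<pi>1 \<pi>2" unfolding eps_def
    by (rule integral_nonneg_AE) (use dTV_ge0[OF pp] in auto)
  show "eps \<rho> \<pi>1 \<pi>2 \<le> 1" unfolding eps_def
    by (rule prob_space.integral_le_const[OF ps eps_integrable[OF assms]]) (use dTV_le1[OF pp] in auto)
qed

lemma eps_sym:
  assumes "\<pi>1 \<in> P" "\<pi>2 \<in> P"
  shows "eps \<rho> \<pi>1 \<pi>2 = eps \<rho> \<pi>2 \<pi>1"
proof -
  have "sets (\<pi>1 x g) = sets (\<pi>2 x g)" for x g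
    using polP assms by (auto simp: policy_def)
  then show ?thesis unfolding eps_def by (simp add: dTV_sym)
qed

lemma eps_tri:
  assumes "joint_dist XG \<rho>" "\<pi>1 \<in> P" "\<pi>2 \<in> P" "\<pi>3 \<in> P"
  shows "eps \<rho> \<pi>1 \<pi>3 \<le> eps \<rho> \<pi>1 \<pi>2 + eps \<rho> \<pi>2 \<pi>3"
proof -
  have pp: "prob_space (\<pi>1 x g)" "prob_space (\<pi>2 x g)" "prob_space (\<pi>3 x g)"
    "sets (\<pi>1 x g) = sets (\<pi>2 x g)" for x g
    using polP assms(2-4) by (auto simp: policy_def)
  have "eps \<rho> \<pi>1 \<pi>3 \<le> (\<integral>p. dTV (\<pi>1 (fst p) (snd p)) (\<pi>2 (fst p) (snd p)) + dTV (\<pi>2 (fst p) (snd p)) (\<pi>3 (fst p) (snd p)) \<partial>\<rho>)"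
    unfolding eps_def
    by (rule integral_mono[OF eps_integrable[OF assms(1,2,4)]
          Bochner_Integration.integrable_add[OF eps_integrable[OF assms(1,2,3)] eps_integrable[OF assms(1,3,4)]]])
      (rule dTV_tri[OF pp])
  also have "\<dots> = eps \<rho> \<pi>1 \<pi>2 + eps \<rho> \<pi>2 \<pi>3"
    unfolding eps_def
    by (rule Bochner_Integration.integral_add[OF eps_integrable[OF assms(1,2,3)] eps_integrable[OF assms(1,3,4)]])
  finally show ?thesis .
qed

lemma dPi_upper:
  assumes "joint_dist XG \<rho>" "joint_dist XG \<rho>'" "Pol \<subseteq> P" "\<pi>1 \<in> Pol" "\<pi>2 \<in> Pol"
  shows "eps \<rho> \<pi>1 \<pi>2 \<le> eps \<rho>' \<pi>1 \<pi>2 + dPiDeltaPi Pol \<rho> \<rho>'"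
proof -
  have bdd: "bdd_above ((\<lambda>pp. \<bar>eps \<rho> (fst pp) (snd pp) - eps \<rho>' (fst pp) (snd pp)\<bar>) ` (Pol \<times> Pol))"
  proof (intro bdd_aboveI2[where M=1])
    fix pp assume "pp \<in> Pol \<times> Pol"
    then have "fst pp \<in> P" "snd pp \<in> P" using assms(3) by auto
    then show "\<bar>eps \<rho> (fst pp) (snd pp) - eps \<rho>' (fst pp) (snd pp)\<bar> \<le> 1"
      using eps_bounds[OF assms(1)] eps_bounds[OF assms(2)] by (smt (verit))
  qed
  have "\<bar>eps \<rho> \<pi>1 \<pi>2 - eps \<rho>' \<pi>1 \<pi>2\<bar> \<le> dPiDeltaPi Pol \<rho> \<rho>'"
    unfolding dPiDeltaPi_def
    using cSUP_upper[OF _ bdd, of "(\<pi>1, \<pi>2)"] assms(4,5) by auto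
  then show ?thesis by linarith
qed


end

theorem proposition3:
  fixes XG :: "('x \<times> 'g) measure" and A :: "'a measure"
    and Pol :: "('x \<Rightarrow> 'g \<Rightarrow> 'a measure) set" and \<pi>G :: "'x \<Rightarrow> 'g \<Rightarrow> 'a measure"
    and N :: nat and \<rho>e :: "nat \<Rightarrow> ('x \<times> 'g) measure" and \<rho>t :: "('x \<times> 'g) measure"
    and \<pi> :: "'x \<Rightarrow> 'g \<Rightarrow> 'a measure"
  assumes N_pos: "N \<ge> 1"
    and src: "\<forall>i\<in>{1..N}. joint_dist XG (\<rho>e i)"
    and tgt: "joint_dist XG \<rho>t"
    and polG: "policy A \<pi>G"
    and polPi: "\<forall>\<pi>'\<in>Pol. policy A \<pi>'"
    and meas: "\<forall>\<pi>1\<in>insert \<pi>G Pol. \<forall>\<pi>2\<in>insert \<pi>G Pol.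
                 (\<lambda>p. dTV (\<pi>1 (fst p) (snd p)) (\<pi>2 (fst p) (snd p))) \<in> borel_measurable XG"
    and pi_in: "\<pi> \<in> Pol"
  shows "eps \<rho>t \<pi> \<pi>G \<le>
           (INF \<alpha>\<in>simplex_weights N.
              (\<Sum>i=1..N. \<alpha> i * eps (\<rho>e i) \<pi> \<pi>G) + lambda_alpha Pol \<pi>G N \<rho>e \<rho>t \<alpha>)
           + delta_E Pol N \<rho>e
           + (INF \<rho>\<in>char_set XG Pol (delta_E Pol N \<rho>e) {1..N} \<rho>e. dPiDeltaPi Pol \<rho> \<rho>t)"
proof -
  define P where "P = insert \<pi>G Pol"
  define \<delta> where "\<delta> = delta_E Pol N \<rho>e"
  define C where "C = char_set XG Pol \<delta> {1..N} \<rho>e"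
  have polP: "\<forall>\<pi>'\<in>P. policy A \<pi>'" using polG polPi by (auto simp: P_def)
  have measP: "\<forall>\<pi>1\<in>P. \<forall>\<pi>2\<in>P.
                 (\<lambda>p. dTV (\<pi>1 (fst p) (snd p)) (\<pi>2 (fst p) (snd p))) \<in> borel_measurable XG"
    using meas by (simp add: P_def)
  note tri = eps_tri[OF polP measP] and sym = eps_sym[OF polP measP]
    and bnd = eps_bounds[OF polP measP] and dup = dPi_upper[OF polP measP]
  have PolP: "Pol \<subseteq> P" and GP: "\<pi>G \<in> P" and piP: "\<pi> \<in> P" using pi_in by (auto simp: P_def)
  have C_jd: "joint_dist XG \<rho>" if "\<rho> \<in> C" for \<rho> using that by (simp add: C_def char_set_def)
  have C_d: "dPiDeltaPi Pol \<rho> (\<rho>e i) \<le> \<delta>" if "\<rho> \<in> C" "i \<in> {1..N}" for \<rho> i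
    using that by (simp add: C_def char_set_def)
  have core: "eps \<rho>t \<pi> \<pi>G \<le> (\<Sum>i=1..N. \<alpha> i * eps (\<rho>e i) \<pi> \<pi>G)
       + ((\<Sum>i=1..N. \<alpha> i * eps (\<rho>e i) \<pi>' \<pi>G) + eps \<rho>t \<pi>' \<pi>G) + \<delta> + dPiDeltaPi Pol \<rho> \<rho>t"
    if a: "\<alpha> \<in> simplex_weights N" and r: "\<rho> \<in> C" and p: "\<pi>' \<in> Pol" for \<alpha> \<rho> \<pi>'
  proof -
    have p': "\<pi>' \<in> P" using p PolP by auto
    have rj: "joint_dist XG \<rho>" using C_jd[OF r] .
    have a0: "\<forall>i\<in>{1..N}. 0 \<le> \<alpha> i" and a1: "(\<Sum>i=1..N. \<alpha> i) = 1"
      using a by (auto simp: simplex_weights_def)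
    have each: "eps \<rho> \<pi> \<pi>' \<le> eps (\<rho>e i) \<pi> \<pi>G + eps (\<rho>e i) \<pi>' \<pi>G + \<delta>" if i: "i \<in> {1..N}" for i
    proof -
      have ji: "joint_dist XG (\<rho>e i)" using src i by auto
      have "eps \<rho> \<pi> \<pi>' \<le> eps (\<rho>e i) \<pi> \<pi>' + dPiDeltaPi Pol \<rho> (\<rho>e i)"
        using dup[OF rj ji PolP pi_in p] .
      moreover have "eps (\<rho>e i) \<pi> \<pi>' \<le> eps (\<rho>e i) \<pi> \<pi>G + eps (\<rho>e i) \<pi>G \<pi>'"
        using tri[OF ji piP GP p'] .
      moreover have "eps (\<rho>e i) \<pi>G \<pi>' = eps (\<rho>e i) \<pi>' \<pi>G" using sym[OF GP p'] .
      ultimately show ?thesis using C_d[OF r i] by linarith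
    qed
    have "eps \<rho> \<pi> \<pi>' = (\<Sum>i=1..N. \<alpha> i * eps \<rho> \<pi> \<pi>')"
      using sum_distrib_right[of \<alpha> "{1..N}" "eps \<rho> \<pi> \<pi>'"] a1 by simp
    also have "\<dots> \<le> (\<Sum>i=1..N. \<alpha> i * (eps (\<rho>e i) \<pi> \<pi>G + eps (\<rho>e i) \<pi>' \<pi>G + \<delta>))"
      by (rule sum_mono) (use a0 each in \<open>auto intro: mult_left_mono\<close>)
    also have "\<dots> = (\<Sum>i=1..N. \<alpha> i * eps (\<rho>e i) \<pi> \<pi>G) + (\<Sum>i=1..N. \<alpha> i * eps (\<rho>e i) \<pi>' \<pi>G) + \<delta>"
      using sum_distrib_right[of \<alpha> "{1..N}" "\<delta>"] a1 by (simp add: distrib_left sum.distrib)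
    finally have A: "eps \<rho> \<pi> \<pi>' \<le> \<dots>" .
    have "eps \<rho>t \<pi> \<pi>G \<le> eps \<rho>t \<pi> \<pi>' + eps \<rho>t \<pi>' \<pi>G" using tri[OF tgt piP p' GP] .
    moreover have "eps \<rho>t \<pi> \<pi>' \<le> eps \<rho> \<pi> \<pi>' + dPiDeltaPi Pol \<rho>t \<rho>"
      using dup[OF tgt rj PolP pi_in p] .
    moreover have "dPiDeltaPi Pol \<rho>t \<rho> = dPiDeltaPi Pol \<rho> \<rho>t"
      unfolding dPiDeltaPi_def by (simp add: abs_minus_commute)
    ultimately show ?thesis using A by linarith
  qed
  have Pne: "Pol \<noteq> {}" using pi_in by auto
  have Cne: "C \<noteq> {}"
  proof -
    have j1: "joint_dist XG (\<rho>e 1)" using src N_pos by auto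
    have fin: "finite {dPiDeltaPi Pol (\<rho>e i) (\<rho>e j) | i j. i \<in> {1..N} \<and> j \<in> {1..N}}"
    proof (rule finite_subset)
      show "{dPiDeltaPi Pol (\<rho>e i) (\<rho>e j) | i j. i \<in> {1..N} \<and> j \<in> {1..N}}
            \<subseteq> (\<lambda>(i,j). dPiDeltaPi Pol (\<rho>e i) (\<rho>e j)) ` ({1..N} \<times> {1..N})" by auto
    qed auto
    have "dPiDeltaPi Pol (\<rho>e 1) (\<rho>e e) \<le> \<delta>" if e: "e \<in> {1..N}" for e
      unfolding \<delta>_def delta_E_def
      by (rule Max_ge[OF fin]) (unfold mem_Collect_eq, rule exI[of _ 1], rule exI[of _ e], use e N_pos in auto)
    then have "\<rho>e 1 \<in> C" unfolding C_def char_set_def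
      using j1 by auto
    then show ?thesis by auto
  qed
  have Sne: "simplex_weights N \<noteq> {}"
  proof -
    have "(\<lambda>i. if i = 1 then 1 else 0) \<in> simplex_weights N"
      using N_pos by (auto simp: simplex_weights_def)
    then show ?thesis by auto
  qed
  have stepA: "eps \<rho>t \<pi> \<pi>G - (\<Sum>i=1..N. \<alpha> i * eps (\<rho>e i) \<pi> \<pi>G) - \<delta> - dPiDeltaPi Pol \<rho> \<rho>t
       \<le> lambda_alpha Pol \<pi>G N \<rho>e \<rho>t \<alpha>"
    if a: "\<alpha> \<in> simplex_weights N" and r: "\<rho> \<in> C" for \<alpha> \<rho>
    unfolding lambda_alpha_def
    by (rule cINF_greatest[OF Pne]) (use core[OF a r] in fastforce)
  have stepB: "eps \<rho>t \<pi> \<pi>G - (\<Sum>i=1..N. \<alpha> i * eps (\<rho>e i) \<pi> \<pi>G) - lambda_alpha Pol \<pi>G N \<rho>e \<rho>t \<alpha> - \<delta>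
       \<le> (INF \<rho>\<in>C. dPiDeltaPi Pol \<rho> \<rho>t)"
    if a: "\<alpha> \<in> simplex_weights N" for \<alpha>
    by (rule cINF_greatest[OF Cne]) (use stepA[OF a] in fastforce)
  have stepC: "eps \<rho>t \<pi> \<pi>G - \<delta> - (INF \<rho>\<in>C. dPiDeltaPi Pol \<rho> \<rho>t)
       \<le> (INF \<alpha>\<in>simplex_weights N.
              (\<Sum>i=1..N. \<alpha> i * eps (\<rho>e i) \<pi> \<pi>G) + lambda_alpha Pol \<pi>G N \<rho>e \<rho>t \<alpha>)"
    by (rule cINF_greatest[OF Sne]) (use stepB in fastforce)
  then show ?thesis unfolding C_def \<delta>_def by linarith
qed

end
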